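(* Let $f(x)=x^TAx+a^Tx+\alpha$ with $A$ real symmetric, and $g_i(x)=x^TB_ix+b_i^Tx+\beta_i$, $i=1,\dots,m$, with each $B_i$ real symmetric positive semidefinite. Consider $(QP)$: $\inf\{f(x): g_i(x)\le0,\ i=1,\dots,m\}$. Suppose there exist $i_0$ and $\lambda\in\mathbb{R}$ with $B_{i_0}\succ0$ such that (H1) and (H2) hold, and there exists $x^0$ with $g_i(x^0)<0$ for all $i$. Let $\bar x$ be feasible for $(QP)$. Then $\bar x$ is a global minimizer of $(QP)$ if and only if there exists $\lambda=(\lambda_1,\dots,\lambda_m)\in\mathbb{R}^m_+$ such that (i) $2\big(A+\sum_{i=1}^m\lambda_iB_i\big)\bar x+\big(a+\sum_{i=1}^m\lambda_ib_i\big)=0$; (ii) $\lambda_ig_i(\bar x)=0$ for $i=1,\dots,m$; (iii) $A+\sum_{i=1}^m\lambda_iB_i\succeq 0$.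
   Context: (H1): $A+\lambda B_{i_0}\succeq 0$. (H2): there is a nonzero $v\in\mathbb{R}^n$ with $(A+\lambda B_{i_0})v=0$, $(a+\lambda b_{i_0})^Tv\le0$, $B_iv=0$ and $b_i^Tv\le0$ for all $i\ne i_0$. (The $\lambda$ in (H1),(H2) is a real scalar unrelated to the multiplier vector in the conclusion.) *)

theory Defs
  imports "HOL-Analysis.Analysis"
begin

definition quadf :: "real^'n^'n \<Rightarrow> real^'n \<Rightarrow> real \<Rightarrow> real^'n \<Rightarrow> real" where
  "quadf M c d x = x \<bullet> (M *v x) + c \<bullet> x + d"

definition symmetric_mat :: "real^'n^'n \<Rightarrow> bool" where
  "symmetric_mat M \<longleftrightarrow> transpose M = M"

definition psd :: "real^'n^'n \<Rightarrow> bool" where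
  "psd M \<longleftrightarrow> symmetric_mat M \<and> (\<forall>x. 0 \<le> x \<bullet> (M *v x))"

definition pd :: "real^'n^'n \<Rightarrow> bool" where
  "pd M \<longleftrightarrow> symmetric_mat M \<and> (\<forall>x. x \<noteq> 0 \<longrightarrow> 0 < x \<bullet> (M *v x))"

end

theory Submission imports Defs begin

lemma sum_mat_mult: "(\<Sum>i\<in>S. F i) *v x = (\<Sum>i\<in>S. F i *v x)"
  by (induction S rule: infinite_finite_induct) (auto simp: matrix_vector_mult_add_rdistrib)

lemma qf_sum: "x \<bullet> ((\<Sum>i\<in>S. l i *\<^sub>R (B i :: real^'n^'n)) *v x) = (\<Sum>i\<in>S. l i * (x \<bullet> (B i *v x)))"
  by (simp add: sum_mat_mult inner_sum_right scaleR_matrix_vector_assoc[symmetric])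

lemma quadf_lagr:
  fixes B :: "'m::finite \<Rightarrow> real^'n^'n"
  shows "quadf A a \<alpha> x + (\<Sum>i\<in>UNIV. l i * quadf (B i) (b i) (\<beta> i) x)
    = quadf (A + (\<Sum>i\<in>UNIV. l i *\<^sub>R B i)) (a + (\<Sum>i\<in>UNIV. l i *\<^sub>R b i)) (\<alpha> + (\<Sum>i\<in>UNIV. l i * \<beta> i)) x"
  by (simp add: quadf_def qf_sum matrix_vector_mult_add_rdistrib inner_add_right inner_add_left
      inner_sum_left sum.distrib distrib_left algebra_simps)

lemma quad_expand:
  fixes M :: "real^'n^'n"
  assumes "symmetric_mat M"
  shows "quadf M c d (y + t *\<^sub>R w) = quadf M c d y + t * ((2 *\<^sub>R (M *v y) + c) \<bullet> w) + t\<^sup>2 * (w \<bullet> (M *v w))"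
proof -
  have s: "y \<bullet> (M *v w) = w \<bullet> (M *v y)"
    using assms unfolding symmetric_mat_def
    by (metis inner_commute vector_transpose_matrix dot_lmul_matrix)
  show ?thesis
    by (simp add: quadf_def matrix_vector_right_distrib matrix_vector_mult_scaleR inner_add_left inner_add_right s inner_commute
        algebra_simps power2_eq_square)
qed

lemma quad_convex:
  fixes M :: "real^'n^'n"
  assumes "\<forall>z. 0 \<le> z \<bullet> (M *v z)" "u \<ge> 0" "v \<ge> 0" "u + v = 1"
  shows "quadf M c d (u *\<^sub>R x + v *\<^sub>R y) \<le> u * quadf M c d x + v * quadf M c d y"
proof -
  have v: "v = 1 - u" using assms by simp
  have "u * quadf M c d x + v * quadf M c d y - quadf M c d (u *\<^sub>R x + v *\<^sub>R y)
        = u * v * ((x - y) \<bullet> (M *v (x - y)))"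
    unfolding v by (simp add: quadf_def matrix_vector_right_distrib matrix_vector_mult_diff_distrib matrix_vector_mult_scaleR inner_add_left inner_add_right
       inner_diff_left inner_diff_right algebra_simps power2_eq_square)
  moreover have "0 \<le> u * v * ((x - y) \<bullet> (M *v (x - y)))" using assms by simp
  ultimately show ?thesis by linarith
qed

lemma sym_sum:
  fixes B :: "'m::finite \<Rightarrow> real^'n^'n"
  assumes "symmetric_mat A" "\<And>i. symmetric_mat (B i)"
  shows "symmetric_mat (A + (\<Sum>i\<in>UNIV. l i *\<^sub>R B i))"
proof -
  have e: "B k $ p $ q = B k $ q $ p" for k p q
    using assms(2)[of k] unfolding symmetric_mat_def transpose_def by (metis vec_lambda_beta)
  have "transpose (\<Sum>i\<in>S. l i *\<^sub>R B i) = (\<Sum>i\<in>S. l i *\<^sub>R B i)" for S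
    by (induction S rule: infinite_finite_induct)
      (auto simp: transpose_def vec_eq_iff e)
  then show ?thesis using assms(1) unfolding symmetric_mat_def by (simp add: transpose_def vec_eq_iff)
qed

lemma strict_comb:
  fixes a1 b1 a2 b2 u v :: real
  assumes "a1 < b1" "a2 < b2" "u \<ge> 0" "v \<ge> 0" "u + v = 1"
  shows "u * a1 + v * a2 < u * b1 + v * b2"
proof (cases "u = 0")
  case True then show ?thesis using assms by simp
next
  case False
  then have "u * a1 < u * b1" using assms by simp
  moreover have "v * a2 \<le> v * b2" using assms by (simp add: mult_left_mono)
  ultimately show ?thesis by linarith
qed

lemma duality:
  fixes h :: "'a::real_vector \<Rightarrow> real" and G :: "'m::finite \<Rightarrow> 'a \<Rightarrow> real"
  assumes hc: "\<And>x y u v. u \<ge> 0 \<Longrightarrow> v \<ge> 0 \<Longrightarrow> u + v = 1 \<Longrightarrow> h (u *\<^sub>R x + v *\<^sub>R y) \<le> u * h x + v * h y"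
    and Gc: "\<And>i x y u v. u \<ge> 0 \<Longrightarrow> v \<ge> 0 \<Longrightarrow> u + v = 1 \<Longrightarrow> G i (u *\<^sub>R x + v *\<^sub>R y) \<le> u * G i x + v * G i y"
    and sl: "\<forall>i. G i x0 < 0"
    and opt: "\<And>x. (\<forall>i. G i x \<le> 0) \<Longrightarrow> p \<le> h x"
  shows "\<exists>\<nu>. (\<forall>i. 0 \<le> \<nu> i) \<and> (\<forall>x. p \<le> h x + (\<Sum>i\<in>UNIV. \<nu> i * G i x))"
proof -
  define S :: "(real \<times> (real^'m)) set" where "S = {q. \<exists>x. h x - p < fst q \<and> (\<forall>i. G i x < snd q $ i)}"
  have "convex S"
    unfolding convex_def
  proof (intro ballI allI impI)
    fix q1 q2 and u v :: real
    assume q: "q1 \<in> S" "q2 \<in> S" and uv: "0 \<le> u" "0 \<le> v" "u + v = 1"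
    obtain x1 where x1: "h x1 - p < fst q1" "\<forall>i. G i x1 < snd q1 $ i" using q(1) unfolding S_def by auto
    obtain x2 where x2: "h x2 - p < fst q2" "\<forall>i. G i x2 < snd q2 $ i" using q(2) unfolding S_def by auto
    have "h (u *\<^sub>R x1 + v *\<^sub>R x2) - p \<le> u * (h x1 - p) + v * (h x2 - p)"
    proof -
      have "u * (h x1 - p) + v * (h x2 - p) = u * h x1 + v * h x2 - (u + v) * p" by (simp add: algebra_simps)
      then show ?thesis using hc[OF uv, of x1 x2] uv(3) by simp
    qed
    also have "\<dots> < u * fst q1 + v * fst q2" using strict_comb[OF x1(1) x2(1) uv] .
    finally have 1: "h (u *\<^sub>R x1 + v *\<^sub>R x2) - p < fst (u *\<^sub>R q1 + v *\<^sub>R q2)" by simp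
    have 2: "G i (u *\<^sub>R x1 + v *\<^sub>R x2) < snd (u *\<^sub>R q1 + v *\<^sub>R q2) $ i" for i
    proof -
      have "G i (u *\<^sub>R x1 + v *\<^sub>R x2) \<le> u * G i x1 + v * G i x2" using Gc[OF uv] .
      also have "\<dots> < u * (snd q1 $ i) + v * (snd q2 $ i)" using strict_comb[OF x1(2)[rule_format] x2(2)[rule_format] uv] .
      finally show ?thesis by simp
    qed
    show "u *\<^sub>R q1 + v *\<^sub>R q2 \<in> S" unfolding S_def using 1 2 by blast
  qed
  moreover have "0 \<notin> S"
  proof
    assume "0 \<in> S"
    then obtain x where "h x - p < 0" "\<forall>i. G i x < 0" unfolding S_def by auto
    then have "\<forall>i. G i x \<le> 0" "h x - p < 0" by (auto simp: less_imp_le)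
    then have "p \<le> h x" "h x - p < 0" using opt[of x] by blast+
    then show False by linarith
  qed
  ultimately obtain a where a: "a \<noteq> 0" "\<forall>q\<in>S. 0 \<le> inner a q"
    using separating_hyperplane_set_0 by blast
  define a0 where "a0 = fst a"
  define w where "w = snd a"
  have K: "0 \<le> a0 * s + (\<Sum>i\<in>UNIV. w $ i * z $ i)" if "h x - p < s" "\<forall>i. G i x < z $ i" for x s z
  proof -
    have "(s, z) \<in> S" unfolding S_def using that by auto
    then have "0 \<le> inner a (s, z)" using a(2) by blast
    then show ?thesis unfolding a0_def w_def by (simp add: inner_prod_def inner_vec_def)
  qed
  define s0 where "s0 = \<bar>h x0 - p\<bar> + 1"
  have s0: "h x0 - p < s0" "s0 > 0" unfolding s0_def by auto
  have a0: "a0 \<ge> 0"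
  proof (rule ccontr)
    assume "\<not> 0 \<le> a0"
    moreover have "0 \<le> a0 * s0 + (\<Sum>i\<in>UNIV. w $ i * (0::real^'m) $ i)"
      using K[OF s0(1), of 0] sl by simp
    ultimately show False using s0(2) by (simp add: zero_le_mult_iff)
  qed
  have wpos: "w $ k \<ge> 0" for k
  proof (rule ccontr)
    assume wk: "\<not> 0 \<le> w $ k"
    define T where "T = (\<bar>a0 * s0\<bar> + 1) / (- w $ k)"
    define z :: "real^'m" where "z = (\<chi> i. if i = k then T else 0)"
    have T: "T > 0" unfolding T_def using wk by (intro divide_pos_pos) auto
    have "\<forall>i. G i x0 < z $ i" unfolding z_def using sl T by (simp, meson less_trans)
    from K[OF s0(1) this] have "0 \<le> a0 * s0 + (\<Sum>i\<in>UNIV. w $ i * z $ i)" .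
    also have "(\<Sum>i\<in>UNIV. w $ i * z $ i) = w $ k * T"
      unfolding z_def by (simp add: if_distrib cong: if_cong)
    also have "w $ k * T = - (\<bar>a0 * s0\<bar> + 1)" unfolding T_def using wk by simp
    finally show False by linarith
  qed
  have weak: "0 \<le> a0 * (h x - p) + (\<Sum>i\<in>UNIV. w $ i * G i x)" for x
  proof (rule ccontr)
    define Q where "Q = a0 * (h x - p) + (\<Sum>i\<in>UNIV. w $ i * G i x)"
    define W where "W = a0 + (\<Sum>i\<in>UNIV. w $ i)"
    assume "\<not> 0 \<le> a0 * (h x - p) + (\<Sum>i\<in>UNIV. w $ i * G i x)"
    then have Q: "Q < 0" unfolding Q_def by simp
    have W: "W \<ge> 0" unfolding W_def using a0 wpos by (simp add: sum_nonneg)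
    define e where "e = - Q / (2 * (W + 1))"
    have e: "e > 0" unfolding e_def using Q W by (intro divide_pos_pos) auto
    have "0 \<le> a0 * (h x - p + e) + (\<Sum>i\<in>UNIV. w $ i * (\<chi> j. G j x + e) $ i)"
      by (rule K[where x=x]) (use e in auto)
    also have "\<dots> = Q + e * W"
      unfolding Q_def W_def by (simp add: algebra_simps sum.distrib sum_distrib_left)
    finally have "0 \<le> Q + e * W" .
    moreover have "e * W \<le> - Q / 2"
    proof -
      have "e * W = (- Q / 2) * (W / (W + 1))" unfolding e_def using W by (simp add: field_simps)
      also have "\<dots> \<le> (- Q / 2) * 1" using Q W by (intro mult_left_mono) auto
      finally show ?thesis by simp
    qed
    ultimately show False using Q by linarith
  qed
  have a0pos: "a0 > 0"
  proof (rule ccontr)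
    assume "\<not> 0 < a0"
    then have a00: "a0 = 0" using a0 by simp
    then have "w \<noteq> 0" using a(1) unfolding a0_def w_def by (simp add: prod_eq_iff)
    then obtain k where "w $ k \<noteq> 0" by (metis vec_eq_iff zero_index)
    then have wk: "w $ k > 0" using wpos[of k] by simp
    have "(\<Sum>i\<in>UNIV. w $ i * G i x0) < (\<Sum>i\<in>(UNIV::'m set). 0)"
    proof (rule sum_strict_mono_ex1[where g="\<lambda>i. 0"])
      show "\<forall>i\<in>UNIV. w $ i * G i x0 \<le> 0" using wpos sl by (simp add: mult_nonneg_nonpos less_imp_le)
      show "\<exists>i\<in>UNIV. w $ i * G i x0 < 0" using wk sl by (auto intro: mult_pos_neg)
    qed simp
    then show False using weak[of x0] a00 by simp
  qed
  show ?thesis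
  proof (intro exI[of _ "\<lambda>i. w $ i / a0"] conjI allI)
    fix i show "0 \<le> w $ i / a0" using wpos a0pos by simp
  next
    fix x
    have "(\<Sum>i\<in>UNIV. w $ i / a0 * G i x) = (\<Sum>i\<in>UNIV. w $ i * G i x) / a0"
      by (simp add: sum_divide_distrib)
    moreover have "0 \<le> (h x - p) + (\<Sum>i\<in>UNIV. w $ i * G i x) / a0"
      using weak[of x] a0pos by (simp add: field_simps)
    ultimately show "p \<le> h x + (\<Sum>i\<in>UNIV. w $ i / a0 * G i x)" by simp
  qed
qed

lemma sym_inner:
  fixes M :: "real^'n^'n"
  assumes "symmetric_mat M"
  shows "(M *v y) \<bullet> w = y \<bullet> (M *v w)"
  using assms unfolding symmetric_mat_def
  by (metis inner_commute vector_transpose_matrix dot_lmul_matrix)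

lemma quad_nonneg:
  fixes \<alpha> \<beta> :: real
  assumes "\<forall>t::real. 0 \<le> t * \<alpha> + t\<^sup>2 * \<beta>"
  shows "\<alpha> = 0" "0 \<le> \<beta>"
proof -
  define D where "D = \<bar>\<beta>\<bar> + 1"
  have D: "D > 0" "\<bar>\<beta>\<bar> = D - 1" unfolding D_def by auto
  define t where "t = - \<alpha> / D"
  have "0 \<le> t * \<alpha> + t\<^sup>2 * \<beta>" using assms by blast
  also have "t\<^sup>2 * \<beta> \<le> t\<^sup>2 * \<bar>\<beta>\<bar>" by (intro mult_left_mono) auto
  also have "t * \<alpha> + t\<^sup>2 * \<bar>\<beta>\<bar> = - \<alpha>\<^sup>2 / D\<^sup>2"
    unfolding t_def D(2) using D(1) by (simp add: field_simps power2_eq_square)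
  finally have "\<alpha>\<^sup>2 / D\<^sup>2 \<le> 0" by simp
  moreover have "\<alpha>\<^sup>2 / D\<^sup>2 \<ge> 0" by simp
  ultimately have "\<alpha>\<^sup>2 / D\<^sup>2 = 0" by linarith
  then show a: "\<alpha> = 0" using D(1) by simp
  show "0 \<le> \<beta>" using assms[rule_format, of 1] a by simp
qed

theorem proposition5p2:
  fixes A :: "real^'n^'n" and a :: "real^'n" and \<alpha> :: real
    and B :: "'m::finite \<Rightarrow> real^'n^'n" and b :: "'m \<Rightarrow> real^'n" and \<beta> :: "'m \<Rightarrow> real"
    and i0 :: 'm and \<mu> :: real and xbar :: "real^'n"
  assumes symA: "symmetric_mat A"
    and psdB: "\<And>i. psd (B i)"
    and pdB0: "pd (B i0)"
    and H1: "psd (A + \<mu> *\<^sub>R B i0)"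
    and H2: "\<exists>v. v \<noteq> 0 \<and> (A + \<mu> *\<^sub>R B i0) *v v = 0 \<and> (a + \<mu> *\<^sub>R b i0) \<bullet> v \<le> 0
               \<and> (\<forall>i. i \<noteq> i0 \<longrightarrow> B i *v v = 0 \<and> b i \<bullet> v \<le> 0)"
    and slater: "\<exists>x0. \<forall>i. quadf (B i) (b i) (\<beta> i) x0 < 0"
    and feas: "\<forall>i. quadf (B i) (b i) (\<beta> i) xbar \<le> 0"
  shows "(\<forall>x. (\<forall>i. quadf (B i) (b i) (\<beta> i) x \<le> 0) \<longrightarrow> quadf A a \<alpha> xbar \<le> quadf A a \<alpha> x)
    \<longleftrightarrow> (\<exists>l :: 'm \<Rightarrow> real. (\<forall>i. 0 \<le> l i)
          \<and> 2 *\<^sub>R ((A + (\<Sum>i\<in>UNIV. l i *\<^sub>R B i)) *v xbar) + (a + (\<Sum>i\<in>UNIV. l i *\<^sub>R b i)) = 0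
          \<and> (\<forall>i. l i * quadf (B i) (b i) (\<beta> i) xbar = 0)
          \<and> psd (A + (\<Sum>i\<in>UNIV. l i *\<^sub>R B i)))"
    (is "?opt \<longleftrightarrow> ?kkt")
proof -
  define f where "f = quadf A a \<alpha>"
  define g where "g = (\<lambda>i. quadf (B i) (b i) (\<beta> i))"
  define L where "L = (\<lambda>l::'m \<Rightarrow> real. A + (\<Sum>i\<in>UNIV. l i *\<^sub>R B i))"
  define c where "c = (\<lambda>l::'m \<Rightarrow> real. a + (\<Sum>i\<in>UNIV. l i *\<^sub>R b i))"
  define d where "d = (\<lambda>l::'m \<Rightarrow> real. \<alpha> + (\<Sum>i\<in>UNIV. l i * \<beta> i))"
  have symB: "symmetric_mat (B i)" for i using psdB[of i] unfolding psd_def by simp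
  have lagr: "f x + (\<Sum>i\<in>UNIV. l i * g i x) = quadf (L l) (c l) (d l) x" for l x
    unfolding f_def g_def L_def c_def d_def by (rule quadf_lagr)
  have symL: "symmetric_mat (L l)" for l unfolding L_def by (rule sym_sum[OF symA symB])
  show ?thesis
  proof
    assume ?kkt
    then obtain l where l0: "\<forall>i. 0 \<le> l i" and gr: "2 *\<^sub>R (L l *v xbar) + c l = 0"
      and cs: "\<forall>i. l i * g i xbar = 0" and ps: "psd (L l)"
      unfolding L_def c_def g_def by blast
    show ?opt
    proof (intro allI impI)
      fix x assume fx: "\<forall>i. quadf (B i) (b i) (\<beta> i) x \<le> 0"
      have "(\<Sum>i\<in>UNIV. l i * g i x) \<le> 0"
        using l0 fx unfolding g_def by (intro sum_nonpos) (simp add: mult_nonneg_nonpos)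
      then have 1: "quadf (L l) (c l) (d l) x \<le> f x" using lagr[of x l] by linarith
      have 2: "quadf (L l) (c l) (d l) xbar = f xbar" using lagr[of xbar l] cs by simp
      have "quadf (L l) (c l) (d l) (xbar + 1 *\<^sub>R (x - xbar)) = quadf (L l) (c l) (d l) xbar
           + 1 * ((2 *\<^sub>R (L l *v xbar) + c l) \<bullet> (x - xbar)) + 1\<^sup>2 * ((x - xbar) \<bullet> (L l *v (x - xbar)))"
        by (rule quad_expand[OF symL])
      then have "quadf (L l) (c l) (d l) x = quadf (L l) (c l) (d l) xbar + (x - xbar) \<bullet> (L l *v (x - xbar))"
        using gr by simp
      moreover have "0 \<le> (x - xbar) \<bullet> (L l *v (x - xbar))" using ps unfolding psd_def by blast
      ultimately show "quadf A a \<alpha> xbar \<le> quadf A a \<alpha> x" using 1 2 unfolding f_def by linarith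
    qed
  next
    assume opt: ?opt
    have optf: "f xbar \<le> f x" if "\<forall>i. g i x \<le> 0" for x using opt that unfolding f_def g_def by blast
    obtain h and cc :: real where hconv: "\<And>x y u v. u \<ge> 0 \<Longrightarrow> v \<ge> 0 \<Longrightarrow> u + v = 1 \<Longrightarrow> h (u *\<^sub>R x + v *\<^sub>R y) \<le> u * h x + v * h y"
      and cc: "cc \<ge> 0" and fh: "\<And>x. f x = h x - cc * g i0 x"
      and hopt: "\<And>x. (\<forall>i. g i x \<le> 0) \<Longrightarrow> f xbar \<le> h x"
    proof (cases "\<mu> > 0")
      case False
      have "\<forall>z. 0 \<le> z \<bullet> (A *v z)"
      proof
        fix z
        have e: "z \<bullet> (A *v z) = z \<bullet> ((A + \<mu> *\<^sub>R B i0) *v z) + (- \<mu>) * (z \<bullet> (B i0 *v z))"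
          by (simp add: matrix_vector_mult_add_rdistrib inner_add_right scaleR_matrix_vector_assoc[symmetric])
        have "0 \<le> z \<bullet> ((A + \<mu> *\<^sub>R B i0) *v z)" using H1 unfolding psd_def by blast
        moreover have "0 \<le> (- \<mu>) * (z \<bullet> (B i0 *v z))" using False psdB[of i0] unfolding psd_def by (simp add: mult_nonpos_nonneg)
        ultimately show "0 \<le> z \<bullet> (A *v z)" using e by linarith
      qed
      show ?thesis
      proof (rule that[of f 0])
        fix x y :: "real^'n" and u v :: real
        assume "u \<ge> 0" "v \<ge> 0" "u + v = 1"
        then show "f (u *\<^sub>R x + v *\<^sub>R y) \<le> u * f x + v * f y"
          unfolding f_def using quad_convex \<open>\<forall>z. 0 \<le> z \<bullet> (A *v z)\<close> by blast
      qed (use optf in auto)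
    next
      case True
      define Mh where "Mh = A + \<mu> *\<^sub>R B i0"
      define ch where "ch = a + \<mu> *\<^sub>R b i0"
      define dh where "dh = \<alpha> + \<mu> * \<beta> i0"
      define hh where "hh = quadf Mh ch dh"
      have symMh: "symmetric_mat Mh" using H1 unfolding psd_def Mh_def by simp
      have fh: "f x = hh x - \<mu> * g i0 x" for x
        unfolding f_def g_def hh_def quadf_def Mh_def ch_def dh_def
        by (simp add: matrix_vector_mult_add_rdistrib inner_add_right inner_add_left
            scaleR_matrix_vector_assoc[symmetric] algebra_simps)
      obtain v where v: "v \<noteq> 0" "Mh *v v = 0" "ch \<bullet> v \<le> 0"
        "\<forall>i. i \<noteq> i0 \<longrightarrow> B i *v v = 0 \<and> b i \<bullet> v \<le> 0"
        using H2 unfolding Mh_def ch_def by blast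
      define \<gamma> where "\<gamma> = v \<bullet> (B i0 *v v)"
      have \<gamma>: "\<gamma> > 0" using pdB0 v(1) unfolding pd_def \<gamma>_def by blast
      have hopt: "f xbar \<le> hh x" if fx: "\<forall>i. g i x \<le> 0" for x
      proof -
        define \<beta>1 where "\<beta>1 = (2 *\<^sub>R (B i0 *v x) + b i0) \<bullet> v"
        define \<alpha>0 where "\<alpha>0 = g i0 x"
        define \<phi> where "\<phi> = (\<lambda>t::real. \<alpha>0 + t * \<beta>1 + t\<^sup>2 * \<gamma>)"
        have \<phi>: "g i0 (x + t *\<^sub>R v) = \<phi> t" for t
          unfolding \<phi>_def \<alpha>0_def \<beta>1_def \<gamma>_def g_def by (rule quad_expand[OF symB])
        define T where "T = (\<bar>\<alpha>0\<bar> + \<bar>\<beta>1\<bar>) / \<gamma> + 1"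
        have T1: "T \<ge> 1" unfolding T_def using \<gamma> by simp
        have "\<gamma> * T = \<bar>\<alpha>0\<bar> + \<bar>\<beta>1\<bar> + \<gamma>" unfolding T_def using \<gamma> by (simp add: field_simps)
        then have "T\<^sup>2 * \<gamma> = T * (\<bar>\<alpha>0\<bar> + \<bar>\<beta>1\<bar> + \<gamma>)" by (simp add: power2_eq_square algebra_simps)
        also have "\<dots> \<ge> \<bar>\<alpha>0\<bar> + T * \<bar>\<beta>1\<bar>"
        proof -
          have "T * \<bar>\<alpha>0\<bar> \<ge> \<bar>\<alpha>0\<bar>" using T1 by (simp add: mult_right_mono[of 1 T, simplified])
          moreover have "T * \<gamma> \<ge> 0" using T1 \<gamma> by simp
          ultimately show ?thesis by (simp add: algebra_simps)
        qed
        finally have "\<phi> T \<ge> 0" unfolding \<phi>_def using T1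
          by (smt (verit) abs_ge_minus_self abs_mult abs_of_nonneg mult_minus_right)
        moreover have "\<phi> 0 \<le> 0" unfolding \<phi>_def \<alpha>0_def using fx by simp
        moreover have "continuous_on {0..T} \<phi>" unfolding \<phi>_def by (intro continuous_intros)
        ultimately obtain ts where ts: "0 \<le> ts" "ts \<le> T" "\<phi> ts = 0"
          using IVT'[of \<phi> 0 0 T] T1 by auto
        define y where "y = x + ts *\<^sub>R v"
        have gy0: "g i0 y = 0" unfolding y_def \<phi> using ts by simp
        have gyi: "g i y \<le> 0" for i
        proof (cases "i = i0")
          case True then show ?thesis using gy0 by simp
        next
          case False
          then have Bv: "B i *v v = 0" and bv: "b i \<bullet> v \<le> 0" using v(4) by auto
          have "g i y = g i x + ts * ((2 *\<^sub>R (B i *v x) + b i) \<bullet> v) + ts\<^sup>2 * (v \<bullet> (B i *v v))"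
            unfolding y_def g_def by (rule quad_expand[OF symB])
          also have "(2 *\<^sub>R (B i *v x) + b i) \<bullet> v = b i \<bullet> v"
            using sym_inner[OF symB, of i x v] Bv by (simp add: inner_add_left)
          finally have "g i y = g i x + ts * (b i \<bullet> v)" using Bv by simp
          moreover have "ts * (b i \<bullet> v) \<le> 0" using ts(1) bv by (simp add: mult_nonneg_nonpos)
          ultimately show ?thesis using fx by (metis add_nonpos_nonpos)
        qed
        have "hh y = hh x + ts * ((2 *\<^sub>R (Mh *v x) + ch) \<bullet> v) + ts\<^sup>2 * (v \<bullet> (Mh *v v))"
          unfolding y_def hh_def by (rule quad_expand[OF symMh])
        also have "(2 *\<^sub>R (Mh *v x) + ch) \<bullet> v = ch \<bullet> v"
          using sym_inner[OF symMh, of x v] v(2) by (simp add: inner_add_left)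
        finally have "hh y = hh x + ts * (ch \<bullet> v)" using v(2) by simp
        moreover have "ts * (ch \<bullet> v) \<le> 0" using ts(1) v(3) by (simp add: mult_nonneg_nonpos)
        ultimately have "hh y \<le> hh x" by linarith
        moreover have "f xbar \<le> f y" using optf gyi by blast
        ultimately show ?thesis using fh[of y] gy0 by simp
      qed
      show ?thesis
      proof (rule that[of hh \<mu>])
        fix x y :: "real^'n" and u v :: real
        assume "u \<ge> 0" "v \<ge> 0" "u + v = 1"
        then show "hh (u *\<^sub>R x + v *\<^sub>R y) \<le> u * hh x + v * hh y"
          unfolding hh_def using quad_convex H1 unfolding psd_def Mh_def by blast
      qed (use True fh hopt in auto)
    qed
    obtain x0 where x0: "\<forall>i. g i x0 < 0" using slater unfolding g_def by blast
    have Gc: "g i (u *\<^sub>R x + v *\<^sub>R y) \<le> u * g i x + v * g i y" if "u \<ge> 0" "v \<ge> 0" "u + v = 1" for i x y u v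
      unfolding g_def using quad_convex[OF _ that] psdB[of i] unfolding psd_def by blast
    obtain \<nu> where \<nu>0: "\<forall>i. 0 \<le> \<nu> i" and \<nu>: "\<forall>x. f xbar \<le> h x + (\<Sum>i\<in>UNIV. \<nu> i * g i x)"
      using duality[of h g x0 "f xbar", OF hconv Gc x0 hopt] by blast
    define l where "l = (\<lambda>i. \<nu> i + (if i = i0 then cc else 0))"
    have l0: "\<forall>i. 0 \<le> l i" unfolding l_def using \<nu>0 cc by simp
    have Phi: "f xbar \<le> f x + (\<Sum>i\<in>UNIV. l i * g i x)" for x
    proof -
      have "(\<Sum>i\<in>UNIV. l i * g i x) = (\<Sum>i\<in>UNIV. \<nu> i * g i x) + cc * g i0 x"
      proof -
        have "l i * g i x = \<nu> i * g i x + (if i = i0 then cc * g i x else 0)" for i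
          unfolding l_def by (simp add: algebra_simps)
        then have "(\<Sum>i\<in>UNIV. l i * g i x) = (\<Sum>i\<in>UNIV. \<nu> i * g i x + (if i = i0 then cc * g i x else 0))"
          by simp
        also have "\<dots> = (\<Sum>i\<in>UNIV. \<nu> i * g i x) + cc * g i0 x" by (simp add: sum.distrib)
        finally show ?thesis .
      qed
      then show ?thesis using \<nu> fh[of x] by simp
    qed
    have sum0: "(\<Sum>i\<in>UNIV. l i * g i xbar) = 0"
    proof -
      have "(\<Sum>i\<in>UNIV. l i * g i xbar) \<le> 0"
        using l0 feas unfolding g_def by (intro sum_nonpos) (simp add: mult_nonneg_nonpos)
      then show ?thesis using Phi[of xbar] by linarith
    qed
    have cs: "\<forall>i. l i * g i xbar = 0"
    proof -
      have "\<forall>i\<in>UNIV. 0 \<le> - (l i * g i xbar)"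
        using l0 feas unfolding g_def by (simp add: mult_nonneg_nonpos)
      moreover have "(\<Sum>i\<in>UNIV. - (l i * g i xbar)) = 0" using sum0 by (simp add: sum_negf)
      ultimately show ?thesis using sum_nonneg_eq_0_iff[of UNIV "\<lambda>i. - (l i * g i xbar)"] by simp
    qed
    let ?q = "quadf (L l) (c l) (d l)"
    define gr where "gr = 2 *\<^sub>R (L l *v xbar) + c l"
    have qx: "?q xbar \<le> ?q x" for x using Phi[of x] lagr[of x l] lagr[of xbar l] sum0 by simp
    have quadt: "0 \<le> t * (gr \<bullet> w) + t\<^sup>2 * (w \<bullet> (L l *v w))" for t w
      using qx[of "xbar + t *\<^sub>R w"] quad_expand[OF symL, where c="c l" and d="d l" and y=xbar and t=t and w=w] unfolding gr_def by simp
    have "gr \<bullet> gr = 0" using quad_nonneg(1)[of "gr \<bullet> gr"] quadt[of _ gr] by blast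
    then have gr0: "gr = 0" by simp
    have psL: "psd (L l)" unfolding psd_def using symL quad_nonneg(2) quadt by blast
    show ?kkt
      using l0 gr0 cs psL unfolding gr_def L_def c_def g_def by blast
  qed
qed

end
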